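(* Under the hypotheses and notation of the linearised solver without regularisation (with $L\ge L_\zeta/2$, $u^n$ the solution of the nonlinear discrete equation and $(u^{n,i})_{i\ge0}$ the iterates), let $e^{n,i}:=u^n-u^{n,i}$. Then for every $i\ge1$, $$2\|\Pi_{\mathcal D}e^{n,i}\|_{*,\mathcal D}^2+\delta t\,L\,\|\Pi_{\mathcal D}e^{n,i}\|^2\le \delta t\,L\,\|\Pi_{\mathcal D}e^{n,i-1}\|^2,$$ and consequently $2\sum_{i=1}^\infty\|\Pi_{\mathcal D}e^{n,i}\|_{*,\mathcal D}^2\le\delta t\,L\,\|\Pi_{\mathcal D}e^{n,0}\|^2$.
   Context: Setting: $\Theta\subset\mathbb{R}^d$ open bounded; gradient discretisation with piecewise constant reconstruction $(X_{\mathcal D},\Pi_{\mathcal D},\nabla_{\mathcal D})$: $X_{\mathcal D}$ finite-dimensional with basis indexed by a finite set $B$, $\Pi_{\mathcal D}v=\sum_{j\in B}v_j\mathbf 1_{\Theta_j}$ for disjoint measurable $\Theta_j\subset\Theta$, $\nabla_{\mathcal D}:X_{\mathcal D}\to L^2(\Theta)^d$ linear with $\|\nabla_{\mathcal D}\cdot\|$ a norm. For $g$ with $g(0)=0$, $g(v):=(g(v_j))_j$. $\zeta$ non-decreasing Lipschitz, $\zeta(0)=0$, $0\le\zeta'\le L_\zeta$ a.e.; $\delta t>0$; $r\in L^2(\Theta)$ fixed. $u^n\in X_{\mathcal D}$ satisfies $\langle\Pi_{\mathcal D}u^n,\Pi_{\mathcal D}\varphi\rangle+\delta t\langle\nabla_{\mathcal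 D}\zeta(u^n),\nabla_{\mathcal D}\varphi\rangle=\langle r,\Pi_{\mathcal D}\varphi\rangle$ for all $\varphi\in X_{\mathcal D}$; $u^{n,0}\in X_{\mathcal D}$ arbitrary and for $i\ge1$, $\langle\Pi_{\mathcal D}u^{n,i},\Pi_{\mathcal D}\varphi\rangle+\delta t L\langle\nabla_{\mathcal D}u^{n,i},\nabla_{\mathcal D}\varphi\rangle=\delta t\langle L\nabla_{\mathcal D}u^{n,i-1}-\nabla_{\mathcal D}\zeta(u^{n,i-1}),\nabla_{\mathcal D}\varphi\rangle+\langle r,\Pi_{\mathcal D}\varphi\rangle$ for all $\varphi$. $\|\cdot\|$ is the $L^2(\Theta)$ norm and $\|v\|_{*,\mathcal D}:=\sup\{\int_\Theta v\,\Pi_{\mathcal D}w: w\in X_{\mathcal D},\|\nabla_{\mathcal D}w\|=1\}$. *)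

theory Defs
  imports "HOL-Analysis.Analysis"
begin

definition L2_inner :: "('a::euclidean_space) set \<Rightarrow> ('a \<Rightarrow> real) \<Rightarrow> ('a \<Rightarrow> real) \<Rightarrow> real" where
  "L2_inner \<Theta> f g = (LINT x:\<Theta>|lebesgue. f x * g x)"

definition L2_norm :: "('a::euclidean_space) set \<Rightarrow> ('a \<Rightarrow> real) \<Rightarrow> real" where
  "L2_norm \<Theta> f = sqrt (L2_inner \<Theta> f f)"

definition L2_inner_vec :: "('a::euclidean_space) set \<Rightarrow> ('a \<Rightarrow> 'c::euclidean_space) \<Rightarrow> ('a \<Rightarrow> 'c) \<Rightarrow> real" where
  "L2_inner_vec \<Theta> F G = (LINT x:\<Theta>|lebesgue. F x \<bullet> G x)"

definition L2_norm_vec :: "('a::euclidean_space) set \<Rightarrow> ('a \<Rightarrow> 'c::euclidean_space) \<Rightarrow> real" where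
  "L2_norm_vec \<Theta> F = sqrt (L2_inner_vec \<Theta> F F)"

text \<open>Piecewise constant reconstruction: X_D is identified with 'b \<Rightarrow> real, where the
  finite type 'b indexes the basis (the set B); Pi_D v = sum_j v_j 1_{Theta_j}.\<close>

definition PiD :: "('b::finite \<Rightarrow> 'a set) \<Rightarrow> ('b \<Rightarrow> real) \<Rightarrow> 'a \<Rightarrow> real" where
  "PiD \<Theta>s v = (\<lambda>x. \<Sum>j\<in>UNIV. v j * indicator (\<Theta>s j) x)"

definition dual_norm :: "('a::euclidean_space) set \<Rightarrow> ('b::finite \<Rightarrow> 'a set)
    \<Rightarrow> (('b \<Rightarrow> real) \<Rightarrow> 'a \<Rightarrow> 'c::euclidean_space) \<Rightarrow> ('a \<Rightarrow> real) \<Rightarrow> real" where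
  "dual_norm \<Theta> \<Theta>s grad v =
     Sup {L2_inner \<Theta> v (PiD \<Theta>s w) | w. L2_norm_vec \<Theta> (grad w) = 1}"

end

theory Submission
  imports Defs
begin

lemma PiD_inner:
  fixes \<Theta> :: "(real^'d) set" and \<Theta>s :: "'b::finite \<Rightarrow> (real^'d) set"
  assumes meas: "\<And>j. \<Theta>s j \<in> sets lebesgue" and sub: "\<And>j. \<Theta>s j \<subseteq> \<Theta>"
    and disj: "\<And>j k. j \<noteq> k \<Longrightarrow> \<Theta>s j \<inter> \<Theta>s k = {}" and bd: "bounded \<Theta>"
  shows "L2_inner \<Theta> (PiD \<Theta>s a) (PiD \<Theta>s b) = (\<Sum>j\<in>UNIV. a j * b j * measure lebesgue (\<Theta>s j))"
proof -
  have ii: "indicator (\<Theta>s j) x * indicator (\<Theta>s k) x = (if k = j then indicator (\<Theta>s j) x else (0::real))" for j k x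
    using disj[of j k] by (auto simp: indicator_def)
  have pw: "indicator \<Theta> x *\<^sub>R (PiD \<Theta>s a x * PiD \<Theta>s b x) = (\<Sum>j\<in>UNIV. (a j * b j) * indicator (\<Theta>s j) x)" for x
  proof -
    have "PiD \<Theta>s a x * PiD \<Theta>s b x = (\<Sum>j\<in>UNIV. \<Sum>k\<in>UNIV. (a j * b k) * (indicator (\<Theta>s j) x * indicator (\<Theta>s k) x))"
      unfolding PiD_def sum_product by (simp add: ac_simps)
    also have "\<dots> = (\<Sum>j\<in>UNIV. (a j * b j) * indicator (\<Theta>s j) x)"
      unfolding ii by (simp add: if_distrib cong: if_cong)
    finally have e: "PiD \<Theta>s a x * PiD \<Theta>s b x = (\<Sum>j\<in>UNIV. (a j * b j) * indicator (\<Theta>s j) x)" .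
    show ?thesis
    proof (cases "x \<in> \<Theta>")
      case True then show ?thesis using e by simp
    next
      case False
      then have "indicator (\<Theta>s j) x = (0::real)" for j using sub[of j] by (auto simp: indicator_def)
      then show ?thesis using False by simp
    qed
  qed
  have fin: "emeasure lebesgue (\<Theta>s j) < \<infinity>" for j
    using bounded_set_imp_lmeasurable[OF bounded_subset[OF bd sub] meas] unfolding fmeasurable_def by blast
  have X: "(LINT x|lebesgue. (\<Sum>j\<in>UNIV. a j * b j * indicator (\<Theta>s j) x)) = (\<Sum>j\<in>UNIV. a j * b j * measure lebesgue (\<Theta>s j))"
  proof -
    have "(LINT x|lebesgue. (\<Sum>j\<in>UNIV. a j * b j * indicator (\<Theta>s j) x)) = (\<Sum>j\<in>UNIV. LINT x|lebesgue. a j * b j * indicator (\<Theta>s j) x)"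
      using Bochner_Integration.integral_sum[where I=UNIV and M=lebesgue and f="\<lambda>j x. a j * b j * indicator (\<Theta>s j) x"] meas fin by auto
    also have "\<dots> = (\<Sum>j\<in>UNIV. a j * b j * measure lebesgue (\<Theta>s j))"
      using meas by simp
    finally show ?thesis .
  qed
  show ?thesis
    unfolding L2_inner_def set_lebesgue_integral_def pw by (rule X)
qed

lemma B_int:
  fixes \<Theta> :: "(real^'d) set" and grad :: "('b \<Rightarrow> real) \<Rightarrow> real^'d \<Rightarrow> real^'d"
  assumes op: "open \<Theta>"
    and grad_meas: "\<And>v. grad v \<in> borel_measurable lebesgue"
    and grad_L2: "\<And>v. set_integrable lebesgue \<Theta> (\<lambda>x. (norm (grad v x))\<^sup>2)"
  shows "set_integrable lebesgue \<Theta> (\<lambda>x. grad v x \<bullet> grad w x)"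
proof (rule set_integrable_bound)
  show "set_integrable lebesgue \<Theta> (\<lambda>x. (norm (grad v x))\<^sup>2 + (norm (grad w x))\<^sup>2)"
    using grad_L2[of v] grad_L2[of w] by (rule set_integral_add)
  have "\<Theta> \<in> sets lebesgue" using op by simp
  then show "set_borel_measurable lebesgue \<Theta> (\<lambda>x. grad v x \<bullet> grad w x)"
    unfolding set_borel_measurable_def using grad_meas by measurable
  show "AE x in lebesgue. x \<in> \<Theta> \<longrightarrow> norm (grad v x \<bullet> grad w x) \<le> norm ((norm (grad v x))\<^sup>2 + (norm (grad w x))\<^sup>2)"
  proof (intro AE_I2 impI)
    fix x
    have "norm (grad v x \<bullet> grad w x) \<le> norm (grad v x) * norm (grad w x)"
      using Cauchy_Schwarz_ineq2 by simp
    also have "\<dots> \<le> (norm (grad v x))\<^sup>2 + (norm (grad w x))\<^sup>2"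
    proof -
      have "0 \<le> (norm (grad v x) - norm (grad w x))\<^sup>2" by simp
      moreover have "0 \<le> norm (grad v x) * norm (grad w x)" by simp
      moreover have "2 * (norm (grad v x) * norm (grad w x)) \<le> (norm (grad v x))\<^sup>2 + (norm (grad w x))\<^sup>2"
        using calculation(1) by (simp add: power2_eq_square algebra_simps)
      ultimately show ?thesis by linarith
    qed
    finally show "norm (grad v x \<bullet> grad w x) \<le> norm ((norm (grad v x))\<^sup>2 + (norm (grad w x))\<^sup>2)"
      by simp
  qed
qed

lemma B_lin:
  fixes \<Theta> :: "(real^'d) set" and grad :: "('b \<Rightarrow> real) \<Rightarrow> real^'d \<Rightarrow> real^'d"
  assumes op: "open \<Theta>"
    and grad_linear: "\<And>a b v w. grad (\<lambda>j. a * v j + b * w j) = (\<lambda>x. a *\<^sub>R grad v x + b *\<^sub>R grad w x)"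
    and grad_meas: "\<And>v. grad v \<in> borel_measurable lebesgue"
    and grad_L2: "\<And>v. set_integrable lebesgue \<Theta> (\<lambda>x. (norm (grad v x))\<^sup>2)"
  shows "L2_inner_vec \<Theta> (grad (\<lambda>j. a * v j + b * w j)) (grad p)
       = a * L2_inner_vec \<Theta> (grad v) (grad p) + b * L2_inner_vec \<Theta> (grad w) (grad p)"
proof -
  have i1: "set_integrable lebesgue \<Theta> (\<lambda>x. grad v x \<bullet> grad p x)"
    and i2: "set_integrable lebesgue \<Theta> (\<lambda>x. grad w x \<bullet> grad p x)"
    by (rule B_int[OF op], fact grad_meas, fact grad_L2)+
  have "L2_inner_vec \<Theta> (grad (\<lambda>j. a * v j + b * w j)) (grad p)
      = (LINT x:\<Theta>|lebesgue. a * (grad v x \<bullet> grad p x) + b * (grad w x \<bullet> grad p x))"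
    unfolding L2_inner_vec_def grad_linear by (simp add: inner_add_left)
  also have "\<dots> = a * L2_inner_vec \<Theta> (grad v) (grad p) + b * L2_inner_vec \<Theta> (grad w) (grad p)"
    unfolding L2_inner_vec_def using i1 i2 by (subst set_integral_add) auto
  finally show ?thesis .
qed

lemma B_nonneg:
  shows "L2_inner_vec \<Theta> F F \<ge> 0"
  unfolding L2_inner_vec_def set_lebesgue_integral_def
  by (rule Bochner_Integration.integral_nonneg) simp

lemma riesz:
  fixes B :: "('b::finite \<Rightarrow> real) \<Rightarrow> ('b \<Rightarrow> real) \<Rightarrow> real" and c :: "'b \<Rightarrow> real"
  assumes lin1: "\<And>a b v w p. B (\<lambda>j. a * v j + b * w j) p = a * B v p + b * B w p"
    and sym: "\<And>v w. B v w = B w v"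
    and pd: "\<And>v. B v v = 0 \<Longrightarrow> v = (\<lambda>j. 0)"
  shows "\<exists>z. \<forall>p. B z p = (\<Sum>k\<in>UNIV. p k * c k)"
proof -
  have lin2: "B p (\<lambda>j. a * v j + b * w j) = a * B p v + b * B p w" for a b v w p
    using lin1 sym by metis
  define \<delta> where "\<delta> k = (\<lambda>j. if j = k then 1 else (0::real))" for k :: 'b
  have dec_S: "finite S \<Longrightarrow> B z (\<lambda>j. if j \<in> S then p j else 0) = (\<Sum>k\<in>S. p k * B z (\<delta> k))" for S z p
  proof (induction S rule: finite_induct)
    case empty
    have "(\<lambda>j. if j \<in> {} then p j else 0) = (\<lambda>j. 0 * z j + 0 * z j)" by simp
    then show ?case using lin2[of z 0 z 0 z] by simp
  next
    case (insert k S)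
    have eq: "(\<lambda>j. if j \<in> insert k S then p j else 0) = (\<lambda>j. 1 * (if j \<in> S then p j else 0) + p k * \<delta> k j)"
      using insert.hyps by (auto simp: \<delta>_def fun_eq_iff)
    show ?case unfolding eq lin2 using insert by simp
  qed
  have dec: "B z p = (\<Sum>k\<in>UNIV. p k * B z (\<delta> k))" for z p
    using dec_S[of UNIV z p] by simp
  define T :: "real^'b \<Rightarrow> real^'b" where "T x = (\<chi> k. B (vec_nth x) (\<delta> k))" for x
  have vadd: "vec_nth (x + y) = (\<lambda>j. 1 * vec_nth x j + 1 * vec_nth y j)" for x y :: "real^'b"
    by (simp add: fun_eq_iff)
  have vscale: "vec_nth (r *\<^sub>R x) = (\<lambda>j. r * vec_nth x j + 0 * vec_nth x j)" for r and x :: "real^'b"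
    by (simp add: fun_eq_iff)
  have linT: "linear T"
    by (rule linearI) (simp_all only: T_def vadd vscale lin1, simp_all add: vec_eq_iff)
  have injT: "inj T"
  proof (rule injI)
    fix x y assume "T x = T y"
    then have e: "B (vec_nth x) (\<delta> k) = B (vec_nth y) (\<delta> k)" for k
      by (simp add: T_def vec_eq_iff)
    define d where "d = (\<lambda>j. 1 * vec_nth x j + (-1) * vec_nth y j)"
    have "B d (\<delta> k) = 0" for k unfolding d_def lin1 e by simp
    then have "B d d = 0" using dec[of d d] by simp
    then have "d = (\<lambda>j. 0)" by (rule pd)
    then show "x = y" by (simp add: d_def vec_eq_iff fun_eq_iff)
  qed
  have "surj T" using linear_injective_imp_surjective[OF linT injT] by simp
  then obtain x where x: "T x = (\<chi> k. c k)" by (metis surjD)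
  have "B (vec_nth x) p = (\<Sum>k\<in>UNIV. p k * c k)" for p
  proof -
    have "B (vec_nth x) (\<delta> k) = c k" for k using x by (simp add: T_def vec_eq_iff)
    then show ?thesis using dec[of "vec_nth x" p] by simp
  qed
  then show ?thesis by blast
qed

lemma sup_bound:
  fixes B :: "('b::finite \<Rightarrow> real) \<Rightarrow> ('b \<Rightarrow> real) \<Rightarrow> real"
  assumes lin1: "\<And>a b v w p. B (\<lambda>j. a * v j + b * w j) p = a * B v p + b * B w p"
    and sym: "\<And>v w. B v w = B w v"
    and pd: "\<And>v. B v v = 0 \<Longrightarrow> v = (\<lambda>j. 0)"
    and nn: "\<And>v. B v v \<ge> 0"
  shows "(Sup {B z w | w. sqrt (B w w) = 1})\<^sup>2 \<le> B z z"
proof -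
  have lin2: "B p (\<lambda>j. a * v j + b * w j) = a * B p v + b * B p w" for a b v w p
    using lin1 sym by metis
  define c where "c = sqrt (B z z)"
  have c0: "c \<ge> 0" unfolding c_def using nn[of z] by simp
  have quad: "0 \<le> B z z - 2 * t * B z w + t\<^sup>2 * B w w" for t w
  proof -
    have "0 \<le> B (\<lambda>j. 1 * z j + (-t) * w j) (\<lambda>j. 1 * z j + (-t) * w j)" by (rule nn)
    also have "\<dots> = B z z - 2 * t * B z w + t\<^sup>2 * B w w"
      unfolding lin1 lin2 using sym[of w z] by (simp add: power2_eq_square algebra_simps)
    finally show ?thesis .
  qed
  have bnd: "\<bar>B z w\<bar> \<le> c" if "B w w = 1" for w
  proof (cases "B z z = 0")
    case True
    then have "z = (\<lambda>j. 0)" by (rule pd)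
    then have "z = (\<lambda>j. 0 * w j + 0 * w j)" by simp
    then have "B z w = 0 * B w w + 0 * B w w" using lin1 by metis
    then have "B z w = 0" by simp
    then show ?thesis using c0 by simp
  next
    case False
    then have cp: "c > 0" unfolding c_def using nn[of z] by simp
    have cc: "c\<^sup>2 = B z z" unfolding c_def using nn[of z] by simp
    have "0 \<le> B z z - 2 * c * B z w + c\<^sup>2" using quad[of c w] that by simp
    then have "2 * c * B z w \<le> 2 * c * c" using cc by (simp add: power2_eq_square)
    then have a1: "B z w \<le> c" using cp by simp
    have "0 \<le> B z z - 2 * (-c) * B z w + c\<^sup>2" using quad[of "-c" w] that by simp
    then have "c * (- B z w) \<le> c * c" using cc by (simp add: power2_eq_square)
    then have a2: "- B z w \<le> c" by (rule mult_left_le_imp_le[OF _ cp])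
    show ?thesis using a1 a2 by linarith
  qed
  obtain b0 :: 'b where True by simp
  define v1 where "v1 = (\<lambda>j::'b. 1::real)"
  have "B v1 v1 \<noteq> 0"
  proof
    assume "B v1 v1 = 0"
    then have "v1 = (\<lambda>j. 0)" by (rule pd)
    then show False unfolding v1_def by (metis zero_neq_one)
  qed
  then have vp: "B v1 v1 > 0" using nn[of v1] by simp
  define w0 where "w0 = (\<lambda>j. (1 / sqrt (B v1 v1)) * v1 j + 0 * v1 j)"
  have "B w0 w0 = (1 / sqrt (B v1 v1))\<^sup>2 * B v1 v1"
    unfolding w0_def lin1 unfolding w0_def[symmetric] unfolding w0_def lin2
    by (simp add: power2_eq_square)
  also have "\<dots> = 1" using vp by (simp add: power_divide)
  finally have w0: "B w0 w0 = 1" .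
  define S where "S = {B z w | w. sqrt (B w w) = 1}"
  have mem: "B z w0 \<in> S" unfolding S_def using w0 by auto
  have ub: "x \<le> c" if "x \<in> S" for x
    using that bnd unfolding S_def by fastforce
  have "Sup S \<le> c" using mem ub by (intro cSup_least) auto
  moreover have "B z w0 \<le> Sup S" using mem ub by (intro cSup_upper) (auto intro!: bdd_aboveI[where M=c])
  moreover have "- c \<le> B z w0" using bnd[OF w0] by linarith
  ultimately have "\<bar>Sup S\<bar> \<le> c" by linarith
  then have "(Sup S)\<^sup>2 \<le> c\<^sup>2"
    by (metis abs_le_square_iff abs_of_nonneg c0)
  also have "c\<^sup>2 = B z z" unfolding c_def using nn[of z] by simp
  finally show ?thesis unfolding S_def .
qed

lemma pw_ineq:
  fixes \<zeta> :: "real \<Rightarrow> real"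
  assumes mono: "mono \<zeta>" and lip: "Lz-lipschitz_on UNIV \<zeta>" and LL: "Lz \<le> 2 * L"
  shows "2 * p * (L * (a - b) - (\<zeta> a - \<zeta> b)) - L * p\<^sup>2 - L * (a - b)\<^sup>2 \<le> 0"
proof -
  have Lz0: "Lz \<ge> 0" using lip by (simp add: lipschitz_on_def)
  have L0: "L \<ge> 0" using Lz0 LL by simp
  have dl: "\<bar>\<zeta> a - \<zeta> b\<bar> \<le> Lz * \<bar>a - b\<bar>"
    using lip unfolding lipschitz_on_def by (simp add: dist_real_def)
  have X: "\<bar>L * (a - b) - (\<zeta> a - \<zeta> b)\<bar> \<le> L * \<bar>a - b\<bar>"
  proof (cases "a \<ge> b")
    case True
    then have "\<zeta> a \<ge> \<zeta> b" using mono by (simp add: mono_def)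
    moreover have "Lz * (a - b) \<le> 2 * L * (a - b)" using LL True by (simp add: mult_right_mono)
    ultimately show ?thesis using dl True by (simp add: abs_if algebra_simps split: if_splits)
  next
    case False
    then have "\<zeta> a \<le> \<zeta> b" using mono by (simp add: mono_def)
    moreover have "Lz * (b - a) \<le> 2 * L * (b - a)" using LL False by (simp add: mult_right_mono)
    ultimately show ?thesis using dl False by (simp add: abs_if algebra_simps split: if_splits)
  qed
  define X where "X = L * (a - b) - (\<zeta> a - \<zeta> b)"
  have "2 * p * X \<le> 2 * \<bar>p\<bar> * \<bar>X\<bar>" by (simp add: abs_mult[symmetric] abs_ge_self)
  also have "\<dots> \<le> 2 * \<bar>p\<bar> * (L * \<bar>a - b\<bar>)" using X unfolding X_def[symmetric] by (simp add: mult_left_mono)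
  also have "\<dots> = L * (2 * \<bar>p\<bar> * \<bar>a - b\<bar>)" by simp
  also have "\<dots> \<le> L * (p\<^sup>2 + (a - b)\<^sup>2)"
  proof (rule mult_left_mono[OF _ L0])
    have "0 \<le> (\<bar>p\<bar> - \<bar>a - b\<bar>)\<^sup>2" by simp
    then show "2 * \<bar>p\<bar> * \<bar>a - b\<bar> \<le> p\<^sup>2 + (a - b)\<^sup>2"
      by (simp add: power2_eq_square algebra_simps)
  qed
  finally show ?thesis unfolding X_def by (simp add: algebra_simps)
qed

theorem mainTheorem2:
  fixes \<Theta> :: "(real^'d) set"
    and \<Theta>s :: "'b::finite \<Rightarrow> (real^'d) set"
    and grad :: "('b \<Rightarrow> real) \<Rightarrow> real^'d \<Rightarrow> real^'d"
    and \<zeta> :: "real \<Rightarrow> real"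
    and L\<zeta> L \<delta>t :: real
    and r :: "real^'d \<Rightarrow> real"
    and u :: "'b \<Rightarrow> real"
    and U :: "nat \<Rightarrow> 'b \<Rightarrow> real"
  assumes \<Theta>_open: "open \<Theta>" and \<Theta>_bounded: "bounded \<Theta>"
    and \<Theta>s_meas: "\<And>j. \<Theta>s j \<in> sets lebesgue"
    and \<Theta>s_sub: "\<And>j. \<Theta>s j \<subseteq> \<Theta>"
    and \<Theta>s_disj: "\<And>j k. j \<noteq> k \<Longrightarrow> \<Theta>s j \<inter> \<Theta>s k = {}"
    and grad_linear: "\<And>a b v w. grad (\<lambda>j. a * v j + b * w j) = (\<lambda>x. a *\<^sub>R grad v x + b *\<^sub>R grad w x)"
    and grad_meas: "\<And>v. grad v \<in> borel_measurable lebesgue"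
    and grad_L2: "\<And>v. set_integrable lebesgue \<Theta> (\<lambda>x. (norm (grad v x))\<^sup>2)"
    and grad_norm: "\<And>v. L2_norm_vec \<Theta> (grad v) = 0 \<Longrightarrow> v = (\<lambda>j. 0)"
    and \<zeta>_mono: "mono \<zeta>" and \<zeta>_0: "\<zeta> 0 = 0"
    and \<zeta>_lip: "L\<zeta>-lipschitz_on UNIV \<zeta>"
    and \<zeta>_deriv: "AE x in lborel. \<exists>D. (\<zeta> has_real_derivative D) (at x) \<and> 0 \<le> D \<and> D \<le> L\<zeta>"
    and \<delta>t_pos: "\<delta>t > 0"
    and r_meas: "r \<in> borel_measurable lebesgue"
    and r_L2: "set_integrable lebesgue \<Theta> (\<lambda>x. (r x)\<^sup>2)"
    and L_ge: "L \<ge> L\<zeta> / 2"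
    and u_sol: "\<And>\<phi>. L2_inner \<Theta> (PiD \<Theta>s u) (PiD \<Theta>s \<phi>)
                  + \<delta>t * L2_inner_vec \<Theta> (grad (\<lambda>j. \<zeta> (u j))) (grad \<phi>)
                = L2_inner \<Theta> r (PiD \<Theta>s \<phi>)"
    and U_iter: "\<And>i \<phi>. i \<ge> 1 \<Longrightarrow>
                  L2_inner \<Theta> (PiD \<Theta>s (U i)) (PiD \<Theta>s \<phi>)
                  + \<delta>t * L * L2_inner_vec \<Theta> (grad (U i)) (grad \<phi>)
                = \<delta>t * L2_inner_vec \<Theta>
                     (\<lambda>x. L *\<^sub>R grad (U (i - 1)) x - grad (\<lambda>j. \<zeta> (U (i - 1) j)) x) (grad \<phi>)
                  + L2_inner \<Theta> r (PiD \<Theta>s \<phi>)"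
  defines "e \<equiv> (\<lambda>i j. u j - U i j)"
  shows "(\<forall>i\<ge>1. 2 * (dual_norm \<Theta> \<Theta>s grad (PiD \<Theta>s (e i)))\<^sup>2
                  + \<delta>t * L * (L2_norm \<Theta> (PiD \<Theta>s (e i)))\<^sup>2
                \<le> \<delta>t * L * (L2_norm \<Theta> (PiD \<Theta>s (e (i - 1))))\<^sup>2)
       \<and> summable (\<lambda>i. (dual_norm \<Theta> \<Theta>s grad (PiD \<Theta>s (e (Suc i))))\<^sup>2)
       \<and> 2 * (\<Sum>i. (dual_norm \<Theta> \<Theta>s grad (PiD \<Theta>s (e (Suc i))))\<^sup>2)
           \<le> \<delta>t * L * (L2_norm \<Theta> (PiD \<Theta>s (e 0)))\<^sup>2"
proof -
  define B where "B v w = L2_inner_vec \<Theta> (grad v) (grad w)" for v w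
  define m where "m j = measure lebesgue (\<Theta>s j)" for j
  have m0: "m j \<ge> 0" for j unfolding m_def by simp
  have P: "L2_inner \<Theta> (PiD \<Theta>s a) (PiD \<Theta>s b) = (\<Sum>j\<in>UNIV. a j * b j * m j)" for a b
    unfolding m_def by (rule PiD_inner[OF \<Theta>s_meas \<Theta>s_sub \<Theta>s_disj \<Theta>_bounded])
  have lin1: "B (\<lambda>j. a * v j + b * w j) p = a * B v p + b * B w p" for a b v w p
    unfolding B_def by (rule B_lin[OF \<Theta>_open grad_linear grad_meas grad_L2])
  have sym: "B v w = B w v" for v w
    unfolding B_def L2_inner_vec_def by (simp add: inner_commute)
  have nn: "B v v \<ge> 0" for v unfolding B_def by (rule B_nonneg)
  have pd: "v = (\<lambda>j. 0)" if "B v v = 0" for v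
    using grad_norm[of v] that unfolding B_def L2_norm_vec_def by simp
  have lin2: "B p (\<lambda>j. a * v j + b * w j) = a * B p v + b * B p w" for a b v w p
    using lin1 sym by metis
  have Lz0: "L\<zeta> \<ge> 0" using \<zeta>_lip by (simp add: lipschitz_on_def)
  have L0: "L \<ge> 0" using Lz0 L_ge by simp
  have LL: "L\<zeta> \<le> 2 * L" using L_ge by simp
  have nrm: "(L2_norm \<Theta> (PiD \<Theta>s v))\<^sup>2 = (\<Sum>j\<in>UNIV. v j * v j * m j)" for v
  proof -
    have "(\<Sum>j\<in>UNIV. v j * v j * m j) \<ge> 0" using m0 by (intro sum_nonneg) simp
    then show ?thesis unfolding L2_norm_def P by simp
  qed
  have step: "2 * (dual_norm \<Theta> \<Theta>s grad (PiD \<Theta>s (e i)))\<^sup>2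
                  + \<delta>t * L * (L2_norm \<Theta> (PiD \<Theta>s (e i)))\<^sup>2
                \<le> \<delta>t * L * (L2_norm \<Theta> (PiD \<Theta>s (e (i - 1))))\<^sup>2" if i1: "i \<ge> 1" for i
  proof -
    define U' where "U' = U (i - 1)"
    define d where "d j = \<zeta> (u j) - \<zeta> (U' j)" for j
    have err: "(\<Sum>j\<in>UNIV. e i j * \<phi> j * m j) + \<delta>t * L * B (e i) \<phi>
              = \<delta>t * (L * B (e (i - 1)) \<phi> - B d \<phi>)" for \<phi>
    proof -
      have s1: "(\<Sum>j\<in>UNIV. u j * \<phi> j * m j) + \<delta>t * B (\<lambda>j. \<zeta> (u j)) \<phi> = L2_inner \<Theta> r (PiD \<Theta>s \<phi>)"
        using u_sol[of \<phi>] unfolding P B_def .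
      have g: "(\<lambda>x. L *\<^sub>R grad U' x - grad (\<lambda>j. \<zeta> (U' j)) x) = grad (\<lambda>j. L * U' j + (-1) * \<zeta> (U' j))"
        unfolding grad_linear by simp
      have s2: "(\<Sum>j\<in>UNIV. U i j * \<phi> j * m j) + \<delta>t * L * B (U i) \<phi>
            = \<delta>t * (L * B U' \<phi> + (-1) * B (\<lambda>j. \<zeta> (U' j)) \<phi>) + L2_inner \<Theta> r (PiD \<Theta>s \<phi>)"
        using U_iter[OF i1, of \<phi>] unfolding P g U'_def[symmetric] unfolding B_def[symmetric] lin1 .
      have ei: "e i = (\<lambda>j. 1 * u j + (-1) * U i j)" unfolding e_def by simp
      have ei1: "e (i - 1) = (\<lambda>j. 1 * u j + (-1) * U' j)" unfolding e_def U'_def by simp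
      have dd: "d = (\<lambda>j. 1 * \<zeta> (u j) + (-1) * \<zeta> (U' j))" unfolding d_def by (simp add: fun_eq_iff)
      have sd: "(\<Sum>j\<in>UNIV. e i j * \<phi> j * m j) = (\<Sum>j\<in>UNIV. u j * \<phi> j * m j) - (\<Sum>j\<in>UNIV. U i j * \<phi> j * m j)"
        unfolding e_def by (simp add: sum_subtractf[symmetric] algebra_simps)
      show ?thesis unfolding sd unfolding ei ei1 dd lin1 using s1 s2 by (simp add: algebra_simps)
    qed
    obtain z where z: "\<And>p. B z p = (\<Sum>k\<in>UNIV. p k * (e i k * m k))"
      using riesz[of B "\<lambda>k. e i k * m k", OF lin1 sym pd] by blast
    have dn: "dual_norm \<Theta> \<Theta>s grad (PiD \<Theta>s (e i)) = Sup {B z w | w. sqrt (B w w) = 1}"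
    proof -
      have "L2_inner \<Theta> (PiD \<Theta>s (e i)) (PiD \<Theta>s w) = B z w" for w
        unfolding P z by (simp add: algebra_simps)
      moreover have "L2_norm_vec \<Theta> (grad w) = sqrt (B w w)" for w
        unfolding B_def L2_norm_vec_def ..
      ultimately show ?thesis unfolding dual_norm_def by simp
    qed
    have d2: "(dual_norm \<Theta> \<Theta>s grad (PiD \<Theta>s (e i)))\<^sup>2 \<le> B z z"
      unfolding dn by (rule sup_bound[OF lin1 sym pd nn])
    have ez: "(\<Sum>j\<in>UNIV. e i j * z j * m j) + \<delta>t * L * (\<Sum>j\<in>UNIV. e i j * e i j * m j)
        = \<delta>t * (L * (\<Sum>j\<in>UNIV. e (i - 1) j * e i j * m j) - (\<Sum>j\<in>UNIV. d j * e i j * m j))"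
    proof -
      have "B (e i) z = (\<Sum>j\<in>UNIV. e i j * e i j * m j)"
        using z[of "e i"] sym[of z "e i"] by (simp add: algebra_simps)
      moreover have "B (e (i - 1)) z = (\<Sum>j\<in>UNIV. e (i - 1) j * e i j * m j)"
        using z[of "e (i - 1)"] sym[of z "e (i - 1)"] by (simp add: algebra_simps)
      moreover have "B d z = (\<Sum>j\<in>UNIV. d j * e i j * m j)"
        using z[of d] sym[of z d] by (simp add: algebra_simps)
      ultimately show ?thesis using err[of z] by simp
    qed
    have bz: "B z z = (\<Sum>j\<in>UNIV. e i j * z j * m j)"
      using z[of z] by (simp add: algebra_simps)
    have pwi: "(\<Sum>j\<in>UNIV. (2 * e i j * (L * (u j - U' j) - (\<zeta> (u j) - \<zeta> (U' j)))
                 - L * (e i j)\<^sup>2 - L * (u j - U' j)\<^sup>2) * m j) \<le> 0"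
      by (intro sum_nonpos mult_nonpos_nonneg pw_ineq[OF \<zeta>_mono \<zeta>_lip LL] m0)
    have e1: "e (i - 1) j = u j - U' j" for j unfolding e_def U'_def by simp
    have key: "2 * B z z + \<delta>t * L * (\<Sum>j\<in>UNIV. e i j * e i j * m j)
              - \<delta>t * L * (\<Sum>j\<in>UNIV. e (i - 1) j * e (i - 1) j * m j)
           = \<delta>t * (\<Sum>j\<in>UNIV. (2 * e i j * (L * (u j - U' j) - (\<zeta> (u j) - \<zeta> (U' j)))
                 - L * (e i j)\<^sup>2 - L * (u j - U' j)\<^sup>2) * m j)"
    proof -
      have "2 * B z z = 2 * \<delta>t * (L * (\<Sum>j\<in>UNIV. e (i - 1) j * e i j * m j) - (\<Sum>j\<in>UNIV. d j * e i j * m j))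
            - 2 * \<delta>t * L * (\<Sum>j\<in>UNIV. e i j * e i j * m j)"
        using ez bz by (simp add: algebra_simps)
      then show ?thesis
        unfolding e1 d_def
        by (simp add: sum_distrib_left sum_subtractf[symmetric] sum.distrib[symmetric] power2_eq_square algebra_simps)
    qed
    have "\<delta>t * (\<Sum>j\<in>UNIV. (2 * e i j * (L * (u j - U' j) - (\<zeta> (u j) - \<zeta> (U' j)))
                 - L * (e i j)\<^sup>2 - L * (u j - U' j)\<^sup>2) * m j) \<le> 0"
      using pwi \<delta>t_pos by (simp add: mult_nonneg_nonpos)
    then have "2 * B z z + \<delta>t * L * (\<Sum>j\<in>UNIV. e i j * e i j * m j)
              \<le> \<delta>t * L * (\<Sum>j\<in>UNIV. e (i - 1) j * e (i - 1) j * m j)"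
      using key by linarith
    then show ?thesis unfolding nrm using d2 by linarith
  qed
  define a where "a i = (dual_norm \<Theta> \<Theta>s grad (PiD \<Theta>s (e (Suc i))))\<^sup>2" for i
  define b where "b i = \<delta>t * L * (L2_norm \<Theta> (PiD \<Theta>s (e i)))\<^sup>2" for i
  have st: "2 * a i + b (Suc i) \<le> b i" for i using step[of "Suc i"] by (simp add: a_def b_def)
  have b0: "b i \<ge> 0" for i using L0 \<delta>t_pos by (simp add: b_def)
  have a0: "a i \<ge> 0" for i by (simp add: a_def)
  have ps: "2 * (\<Sum>k<n. a k) + b n \<le> b 0" for n
  proof (induction n)
    case 0 show ?case by simp
  next
    case (Suc n) then show ?case using st[of n] by simp
  qed
  have bd: "(\<Sum>k<n. a k) \<le> b 0 / 2" for n using ps[of n] b0[of n] by simp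
  have sm: "summable a"
    by (rule bounded_imp_summable[of a "b 0 / 2"]) (use a0 bd[of "Suc _"] in \<open>simp_all add: lessThan_Suc_atMost\<close>)
  have "suminf a \<le> b 0 / 2" by (rule suminf_le_const[OF sm bd])
  then show ?thesis using step sm unfolding a_def b_def by simp
qed

end
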